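(* Let $(x^*,y^* )$ be an optimal solution of the LP relaxation of forest cover on $(G,w)$, $G^*$ the subgraph with vertex set $\{i:x^*_i>0\}$ and edge set $\{(i,j):y^*_{ij}>0\}$, and $C=(V_C,E_C)$ any connected component of $G^*$ with at least one edge. Let $M$ be a minimum spanning tree of $C$ (w.r.t. $w$) computed by Kruskal's algorithm and $T=(V_T,E_T)$ the tree obtained from $M$ by deleting every degree-one vertex $i$ of $M$ with $x^*_i<1/2$ together with its incident edge. Then $$\sum_{i\in V_C}x^*_i-\sum_{(i,j)\in E_C}y^*_{ij}(1-w_{ij})\;\ge\;\frac12\Big[|V_T|-\sum_{(i,j)\in E_T}(1-w_{ij})\Big].$$
   Context: Graph $G=(V,E)$ with edge weights $w:E\to[0,1]$. For $S\subseteq V$, $E(S)$ denotes the edges with both endpoints in $S$. The LP relaxation of forest cover: minimize $\sum_{i\in V}x_i-\sum_{(i,j)\in E}y_{ij}(1-w_{ij})$ subject to $x_i+x_j\ge1$ and $x_i\ge y_{ij}$, $x_j\ge y_{ij}$ for all $(i,j)\in E$; $\sum_{i\in S}x_i-\sum_{(i,j)\in E(S)}y_{ij}\ge1$ for all $S\subseteq V$ with $E(S)\ne\emptyset$; $0\le x,y\le1$. *)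

theory Defs
  imports Complex_Main
begin

definition graph :: "'a set \<Rightarrow> 'a set set \<Rightarrow> bool" where
  "graph V E \<longleftrightarrow> finite V \<and> (\<forall>e\<in>E. \<exists>i j. i \<noteq> j \<and> e = {i, j} \<and> i \<in> V \<and> j \<in> V)"

definition induced_edges :: "'a set set \<Rightarrow> 'a set \<Rightarrow> 'a set set" where
  "induced_edges E S = {e \<in> E. e \<subseteq> S}"

definition fc_feasible :: "'a set \<Rightarrow> 'a set set \<Rightarrow> ('a \<Rightarrow> real) \<Rightarrow> ('a set \<Rightarrow> real) \<Rightarrow> bool" where
  "fc_feasible V E x y \<longleftrightarrow>
     (\<forall>i j. {i, j} \<in> E \<longrightarrow> x i + x j \<ge> 1 \<and> x i \<ge> y {i, j} \<and> x j \<ge> y {i, j}) \<and>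
     (\<forall>S. S \<subseteq> V \<and> induced_edges E S \<noteq> {} \<longrightarrow>
          (\<Sum>i\<in>S. x i) - (\<Sum>e\<in>induced_edges E S. y e) \<ge> 1) \<and>
     (\<forall>i\<in>V. 0 \<le> x i \<and> x i \<le> 1) \<and>
     (\<forall>e\<in>E. 0 \<le> y e \<and> y e \<le> 1)"

definition fc_objective :: "'a set \<Rightarrow> 'a set set \<Rightarrow> ('a set \<Rightarrow> real) \<Rightarrow> ('a \<Rightarrow> real) \<Rightarrow> ('a set \<Rightarrow> real) \<Rightarrow> real" where
  "fc_objective V E w x y = (\<Sum>i\<in>V. x i) - (\<Sum>e\<in>E. y e * (1 - w e))"

definition fc_optimal :: "'a set \<Rightarrow> 'a set set \<Rightarrow> ('a set \<Rightarrow> real) \<Rightarrow> ('a \<Rightarrow> real) \<Rightarrow> ('a set \<Rightarrow> real) \<Rightarrow> bool" where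
  "fc_optimal V E w x y \<longleftrightarrow> fc_feasible V E x y \<and>
     (\<forall>x' y'. fc_feasible V E x' y' \<longrightarrow> fc_objective V E w x y \<le> fc_objective V E w x' y')"

definition adj :: "'a set set \<Rightarrow> 'a \<Rightarrow> 'a \<Rightarrow> bool" where
  "adj E u v \<longleftrightarrow> u \<noteq> v \<and> {u, v} \<in> E"

definition connected_comp :: "'a set \<Rightarrow> 'a set set \<Rightarrow> 'a set \<Rightarrow> bool" where
  "connected_comp V E C \<longleftrightarrow> (\<exists>u\<in>V. C = {v \<in> V. (adj E)\<^sup>*\<^sup>* u v})"

definition connected_on :: "'a set \<Rightarrow> 'a set set \<Rightarrow> bool" where
  "connected_on V F \<longleftrightarrow> (\<forall>u\<in>V. \<forall>v\<in>V. (adj F)\<^sup>*\<^sup>* u v)"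

definition is_cycle :: "'a set set \<Rightarrow> 'a list \<Rightarrow> bool" where
  "is_cycle F cs \<longleftrightarrow> length cs \<ge> 3 \<and> distinct cs \<and>
     (\<forall>k. Suc k < length cs \<longrightarrow> adj F (cs ! k) (cs ! Suc k)) \<and>
     adj F (last cs) (hd cs)"

definition acyclic_edges :: "'a set set \<Rightarrow> bool" where
  "acyclic_edges F \<longleftrightarrow> (\<nexists>cs. is_cycle F cs)"

definition spanning_tree :: "'a set \<Rightarrow> 'a set set \<Rightarrow> 'a set set \<Rightarrow> bool" where
  "spanning_tree VC EC F \<longleftrightarrow> F \<subseteq> EC \<and> connected_on VC F \<and> acyclic_edges F"

definition min_spanning_tree :: "'a set \<Rightarrow> 'a set set \<Rightarrow> ('a set \<Rightarrow> real) \<Rightarrow> 'a set set \<Rightarrow> bool" where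
  "min_spanning_tree VC EC w M \<longleftrightarrow> spanning_tree VC EC M \<and>
     (\<forall>F. spanning_tree VC EC F \<longrightarrow> (\<Sum>e\<in>M. w e) \<le> (\<Sum>e\<in>F. w e))"

definition degree :: "'a set set \<Rightarrow> 'a \<Rightarrow> nat" where
  "degree F i = card {e \<in> F. i \<in> e}"

end

theory Submission
  imports Defs "HOL-Library.Transitive_Closure_Table" "HOL-Analysis.Henstock_Kurzweil_Integration"
begin


lemma adj_sym: "adj H u v \<Longrightarrow> adj H v u"
  by (auto simp: adj_def insert_commute)

lemma rtr_sym: "(adj H)\<^sup>*\<^sup>* u v \<Longrightarrow> (adj H)\<^sup>*\<^sup>* v u"
proof (induction rule: rtranclp_induct)
  case base then show ?case by simp
next
  case (step y z)
  then show ?case using adj_sym by (metis converse_rtranclp_into_rtranclp)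
qed

lemma adj_mono: "H \<subseteq> H' \<Longrightarrow> adj H u v \<Longrightarrow> adj H' u v"
  by (auto simp: adj_def)

lemma rtr_mono: "H \<subseteq> H' \<Longrightarrow> (adj H)\<^sup>*\<^sup>* u v \<Longrightarrow> (adj H')\<^sup>*\<^sup>* u v"
  by (metis (no_types, lifting) adj_mono mono_rtranclp)

lemma rpath_props:
  "rtrancl_path r x xs y \<Longrightarrow> last (x#xs) = y \<and> (\<forall>k. Suc k < length (x#xs) \<longrightarrow> r ((x#xs)!k) ((x#xs)!Suc k))"
proof (induction rule: rtrancl_path.induct)
  case (base x) then show ?case by simp
next
  case (step x y ys z)
  show ?case
  proof (intro conjI allI impI)
    show "last (x # y # ys) = z" using step by simp
    fix k assume k: "Suc k < length (x # y # ys)"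
    show "r ((x # y # ys) ! k) ((x # y # ys) ! Suc k)"
    proof (cases k)
      case 0 then show ?thesis using step by simp
    next
      case (Suc k') then show ?thesis using step k by simp
    qed
  qed
qed

lemma acyclic_sep:
  assumes ac: "acyclic_edges H" and e: "{u,v} \<in> H" and uv: "u \<noteq> v"
    and p: "(adj (H - {{u,v}}))\<^sup>*\<^sup>* v u"
  shows False
proof -
  obtain xs0 where "rtrancl_path (adj (H - {{u,v}})) v xs0 u"
    using p rtranclp_eq_rtrancl_path by metis
  then obtain xs where P: "rtrancl_path (adj (H - {{u,v}})) v xs u" and d: "distinct (v#xs)"
    by (metis rtrancl_path_distinct)
  have pp: "last (v#xs) = u" "\<forall>k. Suc k < length (v#xs) \<longrightarrow> adj (H - {{u,v}}) ((v#xs)!k) ((v#xs)!Suc k)"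
    using rpath_props[OF P] by auto
  have "xs \<noteq> []" using pp uv by auto
  show False
  proof (cases "length xs = 1")
    case True
    then obtain a where "xs = [a]" by (metis One_nat_def length_0_conv length_Suc_conv)
    then have "adj (H - {{u,v}}) v u" using pp by auto
    then show False by (auto simp: adj_def insert_commute)
  next
    case False
    have "is_cycle H (v#xs)"
      unfolding is_cycle_def
    proof (intro conjI allI impI)
      show "3 \<le> length (v#xs)" using False \<open>xs \<noteq> []\<close> by (cases "length xs") auto
      show "distinct (v#xs)" by fact
      fix k assume "Suc k < length (v#xs)"
      then show "adj H ((v # xs) ! k) ((v # xs) ! Suc k)"
        using pp(2) adj_mono[of "H - {{u,v}}" H] by blast
    next
      show "adj H (last (v # xs)) (hd (v # xs))" using pp e uv by (simp add: adj_def)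
    qed
    then show False using ac by (auto simp: acyclic_edges_def)
  qed
qed




lemma rtr_remove_edge:
  assumes pq: "(adj (H - {f}))\<^sup>*\<^sup>* p q" and f: "f = {p,q}"
    and ab: "(adj H)\<^sup>*\<^sup>* a b"
  shows "(adj (H - {f}))\<^sup>*\<^sup>* a b"
  using ab
proof (induction rule: rtranclp_induct)
  case base then show ?case by simp
next
  case (step y z)
  show ?case
  proof (cases "{y,z} = f")
    case True
    then have "(y = p \<and> z = q) \<or> (y = q \<and> z = p)" using True f by (simp add: doubleton_eq_iff)
    then have "(adj (H - {f}))\<^sup>*\<^sup>* y z" using pq rtr_sym[OF pq] by auto
    then show ?thesis using step(3) by (metis rtranclp_trans)
  next
    case False
    then have "adj (H - {f}) y z" using step(2) by (auto simp: adj_def)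
    then show ?thesis using step(3) by (metis rtranclp.rtrancl_into_rtrancl)
  qed
qed

lemma rtr_split_edge:
  assumes "(adj H)\<^sup>*\<^sup>* p z"
  shows "(adj (H - {{p,q}}))\<^sup>*\<^sup>* p z \<or> (adj (H - {{p,q}}))\<^sup>*\<^sup>* q z"
  using assms
proof (induction rule: rtranclp_induct)
  case base then show ?case by simp
next
  case (step y z)
  show ?case
  proof (cases "{y,z} = {p,q}")
    case True
    then have "z \<in> {p,q}" by blast
    then have "z = p \<or> z = q" by simp
    then show ?thesis by auto
  next
    case False
    then have "adj (H - {{p,q}}) y z" using step(2) by (auto simp: adj_def)
    then show ?thesis using step(3) by (metis rtranclp.rtrancl_into_rtrancl)
  qed
qed

lemma cycle_walk:
  assumes cyc: "is_cycle H cs"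
  defines "f \<equiv> {cs!0, cs!1}"
  shows "(adj (H - {f}))\<^sup>*\<^sup>* (cs!1) (cs!0)"
proof -
  have len: "3 \<le> length cs" and d: "distinct cs"
    and st: "\<And>k. Suc k < length cs \<Longrightarrow> adj H (cs!k) (cs!Suc k)"
    and cl: "adj H (last cs) (hd cs)" using cyc by (auto simp: is_cycle_def)
  have walk: "(adj (H - {f}))\<^sup>*\<^sup>* (cs!1) (cs!k)" if "1 \<le> k" "k < length cs" for k
    using that
  proof (induction k)
    case 0 then show ?case by simp
  next
    case (Suc k)
    show ?case
    proof (cases "k = 0")
      case True then show ?thesis by simp
    next
      case False
      then have ih: "(adj (H - {f}))\<^sup>*\<^sup>* (cs!1) (cs!k)" using Suc by simp
      have a: "adj H (cs!k) (cs!Suc k)" using st Suc by simp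
      have "{cs!k, cs!Suc k} \<noteq> f"
      proof
        assume "{cs!k, cs!Suc k} = f"
        then have "cs!k \<in> {cs!0, cs!1}" "cs!Suc k \<in> {cs!0, cs!1}" unfolding f_def by blast+
        moreover have "cs!k \<noteq> cs!0" using d False Suc(3) by (subst nth_eq_iff_index_eq) auto
        moreover have "cs!Suc k \<noteq> cs!0" using d Suc(3) by (subst nth_eq_iff_index_eq) auto
        ultimately have "cs!k = cs!1" "cs!Suc k = cs!1" by auto
        then show False using d Suc by (simp add: nth_eq_iff_index_eq)
      qed
      then have "adj (H - {f}) (cs!k) (cs!Suc k)" using a by (auto simp: adj_def)
      then show ?thesis using ih by (metis rtranclp.rtrancl_into_rtrancl)
    qed
  qed
  have lastn: "last cs = cs!(length cs - 1)" using len by (intro last_conv_nth) auto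
  have hd0: "hd cs = cs!0" using len by (cases cs) auto
  have w1: "(adj (H - {f}))\<^sup>*\<^sup>* (cs!1) (last cs)" using walk[of "length cs - 1"] len lastn by simp
  have "{last cs, hd cs} \<noteq> f"
  proof
    assume "{last cs, hd cs} = f"
    then have "last cs \<in> {cs!0, cs!1}" unfolding f_def by blast
    moreover have "last cs \<noteq> cs!0" "last cs \<noteq> cs!1" unfolding lastn using d len by (subst nth_eq_iff_index_eq; auto)+
    ultimately show False by auto
  qed
  then have "adj (H - {f}) (last cs) (cs!0)" using cl hd0 by (auto simp: adj_def)
  then show ?thesis using w1 by (metis rtranclp.rtrancl_into_rtrancl)
qed

lemma span_tree_sub:
  fixes w :: "'a set \<Rightarrow> real"
  assumes "finite H" "H \<subseteq> EC" "connected_on VC H" "\<forall>e\<in>EC. 0 \<le> w e"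
  shows "\<exists>F. spanning_tree VC EC F \<and> sum w F \<le> sum w H"
  using assms
proof (induction "card H" arbitrary: H rule: less_induct)
  case less
  show ?case
  proof (cases "acyclic_edges H")
    case True
    then show ?thesis using less.prems unfolding spanning_tree_def by (intro exI[of _ H]) auto
  next
    case False
    then obtain cs where cyc: "is_cycle H cs" by (auto simp: acyclic_edges_def)
    define f where "f = {cs!0, cs!1}"
    have "adj H (cs!0) (cs!1)" using cyc by (auto simp: is_cycle_def)
    then have fH: "f \<in> H" by (auto simp: adj_def f_def)
    have w: "(adj (H - {f}))\<^sup>*\<^sup>* (cs!0) (cs!1)" using rtr_sym[OF cycle_walk[OF cyc]] unfolding f_def .
    have conn: "connected_on VC (H - {f})"
      using less.prems(3) rtr_remove_edge[OF w f_def] by (auto simp: connected_on_def)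
    have "card (H - {f}) < card H" using fH less.prems(1) by (metis card_Diff1_less)
    then obtain F where F: "spanning_tree VC EC F" "sum w F \<le> sum w (H - {f})"
      using less.hyps[of "H - {f}"] less.prems conn by blast
    have "sum w (H - {f}) = sum w H - w f" using fH less.prems(1) by (simp add: sum_diff1)
    moreover have "0 \<le> w f" using fH less.prems by auto
    ultimately show ?thesis using F by auto
  qed
qed




lemma exit_edge:
  assumes "(adj M)\<^sup>*\<^sup>* v z" "z \<in> R"
  shows "v \<notin> R \<longrightarrow> (\<exists>p q. {p,q} \<in> M \<and> p \<in> R \<and> q \<notin> R \<and> (adj (M - {{p,q}}))\<^sup>*\<^sup>* v q)"
  using assms(1)
proof (induction rule: converse_rtranclp_induct)
  case base then show ?case using assms(2) by simp
next
  case (step a a')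
  show ?case
  proof
    assume aR: "a \<notin> R"
    show "\<exists>p q. {p,q} \<in> M \<and> p \<in> R \<and> q \<notin> R \<and> (adj (M - {{p,q}}))\<^sup>*\<^sup>* a q"
    proof (cases "a' \<in> R")
      case True
      have "{a',a} \<in> M" using step(1) by (auto simp: adj_def insert_commute)
      then show ?thesis using True aR by blast
    next
      case False
      then obtain p q where pq: "{p,q} \<in> M" "p \<in> R" "q \<notin> R" "(adj (M - {{p,q}}))\<^sup>*\<^sup>* a' q"
        using step(3) by blast
      have "{a,a'} \<noteq> {p,q}" using pq(2) aR False by (auto simp: doubleton_eq_iff)
      then have "adj (M - {{p,q}}) a a'" using step(1) by (auto simp: adj_def)
      then have "(adj (M - {{p,q}}))\<^sup>*\<^sup>* a q" using pq(4) by (metis converse_rtranclp_into_rtranclp)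
      then show ?thesis using pq by blast
    qed
  qed
qed

locale fcset =
  fixes V :: "'a set" and E :: "'a set set" and w :: "'a set \<Rightarrow> real"
    and x :: "'a \<Rightarrow> real" and y :: "'a set \<Rightarrow> real"
    and VC :: "'a set" and M :: "'a set set"
  assumes G: "graph V E"
    and w01: "\<forall>e\<in>E. 0 \<le> w e \<and> w e \<le> 1"
    and feas: "fc_feasible V E x y"
    and comp: "connected_comp {i \<in> V. x i > 0} {e \<in> E. y e > 0} VC"
    and hasedge: "induced_edges {e \<in> E. y e > 0} VC \<noteq> {}"
    and mst: "min_spanning_tree VC (induced_edges {e \<in> E. y e > 0} VC) w M"
begin

definition EC where "EC = induced_edges {e \<in> E. y e > 0} VC"

lemma finV: "finite V" using G by (simp add: graph_def)
lemma EV: "e \<in> E \<Longrightarrow> \<exists>i j. i \<noteq> j \<and> e = {i,j} \<and> i \<in> V \<and> j \<in> V"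
  using G by (simp add: graph_def)
lemma E_Pow: "E \<subseteq> Pow V" using EV by blast
lemma finE: "finite E" using E_Pow finV by (meson finite_Pow_iff finite_subset)
lemma VCV: "VC \<subseteq> V" using comp by (auto simp: connected_comp_def)
lemma finVC: "finite VC" using VCV finV finite_subset by blast
lemma ECE: "EC \<subseteq> E" by (auto simp: EC_def induced_edges_def)
lemma ECVC: "e \<in> EC \<Longrightarrow> e \<subseteq> VC" by (auto simp: EC_def induced_edges_def)
lemma finEC: "finite EC" using ECE finE finite_subset by blast
lemma MEC: "M \<subseteq> EC" using mst by (simp add: min_spanning_tree_def spanning_tree_def EC_def)
lemma finM: "finite M" using MEC finEC finite_subset by blast
lemma Mconn: "connected_on VC M" using mst by (simp add: min_spanning_tree_def spanning_tree_def)
lemma Macyc: "acyclic_edges M" using mst by (simp add: min_spanning_tree_def spanning_tree_def)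
lemma Mmin: "spanning_tree VC EC F \<Longrightarrow> sum w M \<le> sum w F"
  using mst by (simp add: min_spanning_tree_def EC_def)
lemma w0: "e \<in> E \<Longrightarrow> 0 \<le> w e" using w01 by auto
lemma w1: "e \<in> E \<Longrightarrow> w e \<le> 1" using w01 by auto
lemma pairc: "{i,j} \<in> E \<Longrightarrow> 1 \<le> x i + x j" using feas by (simp add: fc_feasible_def)
lemma setc: "S \<subseteq> V \<Longrightarrow> induced_edges E S \<noteq> {} \<Longrightarrow> 1 \<le> (\<Sum>i\<in>S. x i) - (\<Sum>e\<in>induced_edges E S. y e)"
  using feas by (simp add: fc_feasible_def)
lemma x0: "i \<in> V \<Longrightarrow> 0 \<le> x i" using feas by (simp add: fc_feasible_def)
lemma y0: "e \<in> E \<Longrightarrow> 0 \<le> y e" using feas by (simp add: fc_feasible_def)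

lemma adjM_VC: "adj M u v \<Longrightarrow> u \<in> VC \<and> v \<in> VC"
  using MEC ECVC by (auto simp: adj_def)

lemma mst_prop:
  assumes e: "{u,v} \<in> EC" "u \<noteq> v" "w {u,v} < t"
  shows "(adj {f\<in>M. w f < t})\<^sup>*\<^sup>* u v"
proof (rule ccontr)
  define F where "F = {f\<in>M. w f < t}"
  define R where "R = {z. (adj F)\<^sup>*\<^sup>* u z}"
  assume "\<not> (adj {f\<in>M. w f < t})\<^sup>*\<^sup>* u v"
  then have vR: "v \<notin> R" by (simp add: R_def F_def)
  have uR: "u \<in> R" by (simp add: R_def)
  have uVC: "u \<in> VC" and vVC: "v \<in> VC" using ECVC[OF e(1)] by auto
  have "(adj M)\<^sup>*\<^sup>* v u" using Mconn uVC vVC by (simp add: connected_on_def)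
  then obtain p q where pq: "{p,q} \<in> M" "p \<in> R" "q \<notin> R" "(adj (M - {{p,q}}))\<^sup>*\<^sup>* v q"
    using exit_edge[of M v u R] uR vR by blast
  define f' where "f' = {p,q}"
  have pnq: "p \<noteq> q" using pq by auto
  have wf: "t \<le> w f'"
  proof (rule ccontr)
    assume "\<not> t \<le> w f'"
    then have "f' \<in> F" using pq(1) by (simp add: F_def f'_def)
    then have "adj F p q" using pnq by (simp add: adj_def f'_def)
    then have "q \<in> R" using pq(2) by (simp add: R_def)
    then show False using pq(3) by simp
  qed
  define M' where "M' = insert {u,v} (M - {f'})"
  have M'EC: "M' \<subseteq> EC" using MEC e(1) by (auto simp: M'_def)
  have finM': "finite M'" using M'EC finEC finite_subset by blast
  have FM: "F \<subseteq> M'" using wf by (auto simp: F_def M'_def)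
  have sub1: "M - {f'} \<subseteq> M'" by (auto simp: M'_def)
  have "(adj F)\<^sup>*\<^sup>* u p" using pq(2) by (simp add: R_def)
  then have up: "(adj M')\<^sup>*\<^sup>* u p" using rtr_mono[OF FM] by blast
  have uv: "adj M' u v" using e(2) by (simp add: adj_def M'_def)
  have vq: "(adj M')\<^sup>*\<^sup>* v q" using rtr_mono[OF sub1] pq(4) f'_def by blast
  have pq': "(adj M')\<^sup>*\<^sup>* p q"
  proof -
    have "(adj M')\<^sup>*\<^sup>* p u" using rtr_sym[OF up] .
    moreover have "(adj M')\<^sup>*\<^sup>* u q" using uv vq by (metis converse_rtranclp_into_rtranclp)
    ultimately show ?thesis by (metis rtranclp_trans)
  qed
  have pa: "(adj M')\<^sup>*\<^sup>* p a" if "a \<in> VC" for a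
  proof -
    have "(adj M)\<^sup>*\<^sup>* p a" using Mconn that pq(1) adjM_VC pnq
      by (metis connected_on_def adj_def)
    then have "(adj (M - {f'}))\<^sup>*\<^sup>* p a \<or> (adj (M - {f'}))\<^sup>*\<^sup>* q a"
      unfolding f'_def by (rule rtr_split_edge)
    then have "(adj M')\<^sup>*\<^sup>* p a \<or> (adj M')\<^sup>*\<^sup>* q a" using rtr_mono[OF sub1] by blast
    then show ?thesis using pq' by (metis rtranclp_trans)
  qed
  have conn: "connected_on VC M'"
    unfolding connected_on_def
  proof (intro ballI)
    fix a b assume "a \<in> VC" "b \<in> VC"
    then show "(adj M')\<^sup>*\<^sup>* a b" using pa rtr_sym by (metis rtranclp_trans)
  qed
  have uvM: "{u,v} \<notin> M"
  proof
    assume "{u,v} \<in> M"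
    then have "adj F u v" using e by (simp add: F_def adj_def)
    then have "v \<in> R" by (simp add: R_def)
    then show False using vR by simp
  qed
  have f'M: "f' \<in> M" using pq(1) by (simp add: f'_def)
  have "sum w M' = w {u,v} + sum w (M - {f'})"
    unfolding M'_def using uvM finM by (simp add: sum.insert)
  also have "\<dots> = w {u,v} + (sum w M - w f')" using f'M finM by (simp add: sum_diff1)
  finally have less: "sum w M' < sum w M" using wf e(3) by simp
  obtain F0 where F0: "spanning_tree VC EC F0" "sum w F0 \<le> sum w M'"
    using span_tree_sub[OF finM' M'EC conn] w0 ECE by blast
  show False using Mmin[OF F0(1)] F0(2) less by simp
qed

end



context fcset begin

lemma reach_VC: "(adj H)\<^sup>*\<^sup>* a b \<Longrightarrow> H \<subseteq> M \<Longrightarrow> a \<in> VC \<Longrightarrow> b \<in> VC"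
  by (induction rule: rtranclp_induct) (auto dest: adj_mono adjM_VC)

end

locale fcroot = fcset +
  fixes r
  assumes rVC: "r \<in> VC" and rx: "1/2 \<le> x r"
begin

definition d where "d z = (LEAST n. (adj M ^^ n) r z)"

lemma D1: "z \<in> VC \<Longrightarrow> (adj M ^^ d z) r z"
proof -
  assume "z \<in> VC"
  then have "(adj M)\<^sup>*\<^sup>* r z" using Mconn rVC by (simp add: connected_on_def)
  then obtain n where "(adj M ^^ n) r z" using rtranclp_imp_relpowp by metis
  then show ?thesis unfolding d_def by (rule LeastI)
qed

lemma D2: "(adj M ^^ n) r z \<Longrightarrow> d z \<le> n"
  unfolding d_def by (rule Least_le)

lemma D3: "adj M a b \<Longrightarrow> d b \<le> d a + 1"
proof -
  assume ab: "adj M a b"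
  then have "a \<in> VC" using adjM_VC by blast
  then have "(adj M ^^ Suc (d a)) r b" using D1 ab by (rule_tac relpowp_Suc_I) auto
  then show ?thesis using D2 by fastforce
qed

lemma D4: "z \<in> VC \<Longrightarrow> d z = Suc n \<Longrightarrow> \<exists>p. adj M p z \<and> d p = n"
proof -
  assume z: "z \<in> VC" "d z = Suc n"
  then have "(adj M ^^ Suc n) r z" using D1 by metis
  then obtain p where p: "(adj M ^^ n) r p" "adj M p z" by (rule relpowp_Suc_E)
  have "d p \<le> n" using D2 p(1) .
  moreover have "d z \<le> d p + 1" using D3 p(2) .
  ultimately show ?thesis using p(2) z(2) by (intro exI[of _ p]) auto
qed

lemma Dr: "d r = 0" using D2[of 0 r] by simp

lemma D0: "z \<in> VC \<Longrightarrow> d z = 0 \<Longrightarrow> z = r"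
  using D1 by (metis relpowp_0_E)

lemma SP: "v \<in> VC \<Longrightarrow> u \<noteq> v \<Longrightarrow> d v \<le> d u \<Longrightarrow> (adj {e\<in>M. u \<notin> e})\<^sup>*\<^sup>* r v"
proof (induction "d v" arbitrary: v)
  case 0
  then show ?case using D0 by fastforce
next
  case (Suc m)
  obtain p where p: "adj M p v" "d p = m" using D4 Suc.prems(1) Suc.hyps(2)[symmetric] by blast
  have pVC: "p \<in> VC" using p(1) adjM_VC by blast
  have pu: "p \<noteq> u" using p(2) Suc.hyps(2) Suc.prems(3) by auto
  have "(adj {e\<in>M. u \<notin> e})\<^sup>*\<^sup>* r p"
    using Suc.hyps(1)[of p] p(2) pVC pu Suc.hyps(2) Suc.prems(3) by auto
  moreover have "adj {e\<in>M. u \<notin> e} p v" using p(1) pu Suc.prems(2) by (auto simp: adj_def)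
  ultimately show ?case by (metis rtranclp.rtrancl_into_rtrancl)
qed

lemma avoid_sub: "{e\<in>M. u \<notin> e} \<subseteq> M - {{u,a}}" "{e\<in>M. u \<notin> e} \<subseteq> M - {{a,u}}" by auto

lemma N1: "adj M c a \<Longrightarrow> d a \<noteq> d c"
proof
  assume ca: "adj M c a" and eq: "d a = d c"
  have VC: "c \<in> VC" "a \<in> VC" using ca adjM_VC by auto
  have ne: "c \<noteq> a" using ca by (simp add: adj_def)
  have "(adj {e\<in>M. a \<notin> e})\<^sup>*\<^sup>* r c" using SP[of c a] VC ne eq by auto
  then have 1: "(adj (M - {{c,a}}))\<^sup>*\<^sup>* r c" using rtr_mono[OF avoid_sub(2)] by blast
  have "(adj {e\<in>M. c \<notin> e})\<^sup>*\<^sup>* r a" using SP[of a c] VC ne eq by auto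
  then have 2: "(adj (M - {{c,a}}))\<^sup>*\<^sup>* r a" using rtr_mono[OF avoid_sub(1)] by blast
  have "(adj (M - {{c,a}}))\<^sup>*\<^sup>* a c" using rtr_sym[OF 2] 1 by (metis rtranclp_trans)
  moreover have "{c,a} \<in> M" using ca by (simp add: adj_def)
  ultimately show False using acyclic_sep[OF Macyc _ ne] by blast
qed

lemma N2: "adj M a c \<Longrightarrow> adj M b c \<Longrightarrow> d a < d c \<Longrightarrow> d b < d c \<Longrightarrow> a = b"
proof (rule ccontr)
  assume ac: "adj M a c" and bc: "adj M b c" and da: "d a < d c" and db: "d b < d c" and ab: "a \<noteq> b"
  have VC: "c \<in> VC" "a \<in> VC" "b \<in> VC" using ac bc adjM_VC by auto
  have ne: "c \<noteq> a" "c \<noteq> b" using ac bc by (auto simp: adj_def)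
  have "(adj {e\<in>M. c \<notin> e})\<^sup>*\<^sup>* r a" using SP[of a c] VC ne da by auto
  then have 1: "(adj (M - {{c,a}}))\<^sup>*\<^sup>* r a" using rtr_mono[OF avoid_sub(1)] by blast
  have "(adj {e\<in>M. c \<notin> e})\<^sup>*\<^sup>* r b" using SP[of b c] VC ne db by auto
  then have 2: "(adj (M - {{c,a}}))\<^sup>*\<^sup>* r b" using rtr_mono[OF avoid_sub(1)] by blast
  have "{b,c} \<noteq> {c,a}" using ab ne by (auto simp: doubleton_eq_iff)
  then have 3: "adj (M - {{c,a}}) b c" using bc by (auto simp: adj_def)
  have "(adj (M - {{c,a}}))\<^sup>*\<^sup>* a c" using rtr_sym[OF 1] 2 3
    by (metis rtranclp_trans rtranclp.rtrancl_into_rtrancl)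
  moreover have "{c,a} \<in> M" using ac by (simp add: adj_def insert_commute)
  ultimately show False using acyclic_sep[OF Macyc _ ne(1)] by blast
qed

definition par where "par z = (SOME p. adj M p z \<and> d p < d z)"

lemma par: "z \<in> VC \<Longrightarrow> z \<noteq> r \<Longrightarrow> adj M (par z) z \<and> d (par z) < d z"
proof -
  assume z: "z \<in> VC" "z \<noteq> r"
  then have "d z \<noteq> 0" using D0 by blast
  then obtain n where "d z = Suc n" using not0_implies_Suc by blast
  then obtain p where "adj M p z" "d p = n" using D4 z by blast
  then have "\<exists>p. adj M p z \<and> d p < d z" using \<open>d z = Suc n\<close> by auto
  then show ?thesis unfolding par_def by (rule someI_ex)
qed

lemma par_unique: "z \<in> VC \<Longrightarrow> z \<noteq> r \<Longrightarrow> adj M p z \<Longrightarrow> d p < d z \<Longrightarrow> p = par z"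
  using par N2 by blast

definition pe where "pe z = {z, par z}"

lemma pe_M: "z \<in> VC \<Longrightarrow> z \<noteq> r \<Longrightarrow> pe z \<in> M"
  using par by (auto simp: pe_def adj_def insert_commute)

lemma top_lemma:
  assumes z: "z \<in> VC" "z \<noteq> r" "t \<le> w (pe z)"
    and zz: "(adj {e\<in>M. w e < t})\<^sup>*\<^sup>* z z'" "z' \<noteq> z"
  shows "d z < d z'"
proof (rule ccontr)
  assume "\<not> d z < d z'"
  then have le: "d z' \<le> d z" by simp
  have z'VC: "z' \<in> VC" using reach_VC[OF zz(1) _ z(1)] by auto
  have pz: "adj M (par z) z" "d (par z) < d z" using par z(1,2) by auto
  have pne: "par z \<noteq> z" using pz(1) by (simp add: adj_def)
  have pVC: "par z \<in> VC" using pz(1) adjM_VC by blast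
  have sub: "{e\<in>M. z \<notin> e} \<subseteq> M - {pe z}" by (auto simp: pe_def)
  have "(adj {e\<in>M. z \<notin> e})\<^sup>*\<^sup>* r z'" using SP[OF z'VC] zz(2) le by auto
  then have 1: "(adj (M - {pe z}))\<^sup>*\<^sup>* r z'" using rtr_mono[OF sub] by blast
  have "(adj {e\<in>M. z \<notin> e})\<^sup>*\<^sup>* r (par z)" using SP[OF pVC] pne pz(2) by auto
  then have 2: "(adj (M - {pe z}))\<^sup>*\<^sup>* r (par z)" using rtr_mono[OF sub] by blast
  have sub2: "{e\<in>M. w e < t} \<subseteq> M - {pe z}" using z(3) by auto
  have 3: "(adj (M - {pe z}))\<^sup>*\<^sup>* z z'" using rtr_mono[OF sub2] zz(1) by blast
  have "(adj (M - {pe z}))\<^sup>*\<^sup>* z (par z)" using 3 rtr_sym[OF 1] 2 by (metis rtranclp_trans)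
  then have "(adj (M - {{par z, z}}))\<^sup>*\<^sup>* z (par z)" by (simp add: pe_def insert_commute)
  moreover have "{par z, z} \<in> M" using pz(1) by (simp add: adj_def)
  ultimately show False using acyclic_sep[OF Macyc _ pne] by blast
qed

end



lemma pair_sum:
  fixes g :: "'a \<Rightarrow> real"
  assumes fin: "finite Z" and PZ: "P \<subseteq> Z" and DP: "D \<subseteq> P" and inj: "inj_on c D"
    and cD: "c ` D \<subseteq> P - D"
    and h1: "\<forall>z\<in>D. 1 \<le> g z + g (c z)" and h2: "\<forall>z\<in>P - D. 1/2 \<le> g z"
    and h3: "\<forall>z\<in>Z - P. 0 \<le> g z"
  shows "real (card P) / 2 \<le> sum g Z"
proof -
  have finP: "finite P" using fin PZ finite_subset by blast
  have finD: "finite D" using finP DP finite_subset by blast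
  define R where "R = P - D - c ` D"
  have finR: "finite R" using finP by (simp add: R_def)
  have s1: "sum g Z = sum g (Z - P) + sum g P" using sum.subset_diff[OF PZ fin] by simp
  have s2: "sum g (Z - P) \<ge> 0" using h3 by (intro sum_nonneg) auto
  have Pdec: "P = D \<union> c ` D \<union> R" using DP cD by (auto simp: R_def)
  have disj1: "D \<inter> c ` D = {}" using cD by auto
  have disj2: "(D \<union> c ` D) \<inter> R = {}" by (auto simp: R_def)
  have finCD: "finite (c ` D)" using finD by simp
  have sP: "sum g P = sum g D + sum g (c ` D) + sum g R"
    unfolding Pdec using finD finCD finR disj1 disj2
    by (simp add: sum.union_disjoint)
  have sc: "sum g (c ` D) = sum (g \<circ> c) D" using inj by (simp add: sum.reindex)
  have sD: "sum g D + sum (g \<circ> c) D \<ge> real (card D)"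
  proof -
    have "sum g D + sum (g \<circ> c) D = (\<Sum>z\<in>D. g z + g (c z))" by (simp add: sum.distrib)
    also have "\<dots> \<ge> (\<Sum>z\<in>D. 1)" using h1 by (intro sum_mono) auto
    finally show ?thesis by simp
  qed
  have sR: "sum g R \<ge> real (card R) / 2"
  proof -
    have "sum g R \<ge> (\<Sum>z\<in>R. 1/2)" using h2 by (intro sum_mono) (auto simp: R_def)
    then show ?thesis by simp
  qed
  have cP: "card P = card D + card (c ` D) + card R"
    unfolding Pdec using finD finCD finR disj1 disj2
    by (simp add: card_Un_disjoint)
  have cc: "card (c ` D) = card D" using inj by (simp add: card_image)
  show ?thesis using s1 s2 sP sc sD sR cP cc by simp
qed

context fcroot begin

definition L where "L = {i \<in> VC. degree M i = 1 \<and> x i < 1/2}"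
definition VT where "VT = VC - L"
definition ET where "ET = {e \<in> M. e \<inter> L = {}}"
definition F where "F t = {e \<in> M. w e < t}"
definition Z where "Z t = {z \<in> VC. z = r \<or> t \<le> w (pe z)}"
definition Gs where "Gs t z = {v \<in> VC. (adj (F t))\<^sup>*\<^sup>* z v}"
definition Ez where "Ez t z = {e \<in> EC. w e < t \<and> e \<subseteq> Gs t z}"
definition val where "val t z = (\<Sum>i\<in>Gs t z. x i) - (\<Sum>e\<in>Ez t z. y e)"

lemma FM: "F t \<subseteq> M" by (auto simp: F_def)

lemma Gs_self: "z \<in> VC \<Longrightarrow> z \<in> Gs t z" by (simp add: Gs_def)
lemma Gs_VC: "Gs t z \<subseteq> VC" by (auto simp: Gs_def)
lemma finGs: "finite (Gs t z)" using Gs_VC finVC finite_subset by blast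
lemma finZ: "finite (Z t)" using finVC by (simp add: Z_def)

lemma E1:
  assumes z: "z1 \<in> Z t" "z2 \<in> Z t" "z1 \<noteq> z2"
  shows "Gs t z1 \<inter> Gs t z2 = {}"
proof (rule ccontr)
  assume "Gs t z1 \<inter> Gs t z2 \<noteq> {}"
  then obtain v where "(adj (F t))\<^sup>*\<^sup>* z1 v" "(adj (F t))\<^sup>*\<^sup>* z2 v" by (auto simp: Gs_def)
  then have c12: "(adj (F t))\<^sup>*\<^sup>* z1 z2" and c21: "(adj (F t))\<^sup>*\<^sup>* z2 z1"
    using rtr_sym by (metis rtranclp_trans)+
  have VC: "z1 \<in> VC" "z2 \<in> VC" using z by (auto simp: Z_def)
  have a: "z1 \<noteq> r \<Longrightarrow> d z1 < d z2"
    using top_lemma[of z1 t z2] VC z c12 by (auto simp: Z_def F_def)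
  have b: "z2 \<noteq> r \<Longrightarrow> d z2 < d z1"
    using top_lemma[of z2 t z1] VC z c21 by (auto simp: Z_def F_def)
  show False using a b z(3) Dr by (cases "z1 = r"; cases "z2 = r") auto
qed

lemma E2: "u \<in> VC \<Longrightarrow> \<exists>z\<in>Z t. u \<in> Gs t z"
proof (induction "d u" arbitrary: u rule: less_induct)
  case less
  show ?case
  proof (cases "u = r \<or> t \<le> w (pe u)")
    case True
    then show ?thesis using less.prems Gs_self by (auto simp: Z_def)
  next
    case False
    then have ur: "u \<noteq> r" and light: "w (pe u) < t" by auto
    have p: "adj M (par u) u" "d (par u) < d u" using par less.prems ur by auto
    have pVC: "par u \<in> VC" using p(1) adjM_VC by blast
    obtain z where z: "z \<in> Z t" "par u \<in> Gs t z" using less.hyps[OF p(2) pVC] by blast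
    have "pe u \<in> F t" using pe_M[OF less.prems ur] light by (simp add: F_def)
    then have "adj (F t) (par u) u" using p(1) by (auto simp: adj_def pe_def insert_commute)
    then have "u \<in> Gs t z" using z(2) less.prems by (auto simp: Gs_def intro: rtranclp.rtrancl_into_rtrancl)
    then show ?thesis using z(1) by blast
  qed
qed

lemma E3:
  assumes e: "e \<in> EC" "w e < t"
  shows "\<exists>z\<in>Z t. e \<subseteq> Gs t z"
proof -
  obtain u v where uv: "u \<noteq> v" "e = {u,v}" using EV ECE e(1) by blast
  have VC: "u \<in> VC" "v \<in> VC" using ECVC[OF e(1)] uv by auto
  have "(adj (F t))\<^sup>*\<^sup>* u v" using mst_prop[of u v t] e uv by (simp add: F_def)
  moreover obtain z where z: "z \<in> Z t" "u \<in> Gs t z" using E2[OF VC(1)] by blast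
  ultimately have "v \<in> Gs t z" using VC by (auto simp: Gs_def intro: rtranclp_trans)
  then show ?thesis using z uv by blast
qed

lemma E4: "(\<Sum>z\<in>Z t. val t z) \<le> (\<Sum>i\<in>VC. x i) - (\<Sum>e\<in>{e\<in>EC. w e < t}. y e)"
proof -
  have disj: "\<forall>i\<in>Z t. \<forall>j\<in>Z t. i \<noteq> j \<longrightarrow> Gs t i \<inter> Gs t j = {}" using E1 by blast
  have s1: "(\<Sum>z\<in>Z t. \<Sum>i\<in>Gs t z. x i) = (\<Sum>i\<in>(\<Union>z\<in>Z t. Gs t z). x i)"
  proof -
    have "sum x (\<Union>z\<in>Z t. Gs t z) = (\<Sum>z\<in>Z t. sum x (Gs t z))"
      by (rule sum.UNION_disjoint[OF finZ _ disj]) (simp add: finGs)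
    then show ?thesis by simp
  qed
  have s2: "(\<Sum>i\<in>(\<Union>z\<in>Z t. Gs t z). x i) \<le> (\<Sum>i\<in>VC. x i)"
    using Gs_VC VCV x0 finVC by (intro sum_mono2) auto
  have finEz: "finite (Ez t z)" for z using finEC by (simp add: Ez_def)
  have disjE: "\<forall>i\<in>Z t. \<forall>j\<in>Z t. i \<noteq> j \<longrightarrow> Ez t i \<inter> Ez t j = {}"
  proof (intro ballI impI)
    fix i j assume ij: "i \<in> Z t" "j \<in> Z t" "i \<noteq> j"
    show "Ez t i \<inter> Ez t j = {}"
    proof (rule ccontr)
      assume "Ez t i \<inter> Ez t j \<noteq> {}"
      then obtain e where e: "e \<in> EC" "e \<subseteq> Gs t i" "e \<subseteq> Gs t j" by (auto simp: Ez_def)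
      obtain u v where "e = {u,v}" using EV ECE e(1) by blast
      then show False using E1[OF ij] e by auto
    qed
  qed
  have U: "(\<Union>z\<in>Z t. Ez t z) = {e\<in>EC. w e < t}" using E3 by (auto simp: Ez_def)
  have s3: "(\<Sum>z\<in>Z t. \<Sum>e\<in>Ez t z. y e) = (\<Sum>e\<in>{e\<in>EC. w e < t}. y e)"
    using sum.UNION_disjoint[OF finZ _ disjE, of y] finEz U by simp
  have "(\<Sum>z\<in>Z t. val t z) = (\<Sum>z\<in>Z t. \<Sum>i\<in>Gs t z. x i) - (\<Sum>z\<in>Z t. \<Sum>e\<in>Ez t z. y e)"
    by (simp add: val_def sum_subtractf)
  then show ?thesis using s1 s2 s3 by simp
qed

lemma Ez_ind: "Ez t z \<subseteq> induced_edges E (Gs t z)"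
  using ECE by (auto simp: Ez_def induced_edges_def)

lemma val_ge1: "induced_edges E (Gs t z) \<noteq> {} \<Longrightarrow> 1 \<le> val t z"
proof -
  assume ne: "induced_edges E (Gs t z) \<noteq> {}"
  have "1 \<le> (\<Sum>i\<in>Gs t z. x i) - (\<Sum>e\<in>induced_edges E (Gs t z). y e)"
    using setc[OF _ ne] Gs_VC VCV by blast
  moreover have "(\<Sum>e\<in>Ez t z. y e) \<le> (\<Sum>e\<in>induced_edges E (Gs t z). y e)"
    using Ez_ind finE y0 by (intro sum_mono2) (auto simp: induced_edges_def)
  ultimately show ?thesis by (simp add: val_def)
qed

lemma val_ge0: "0 \<le> val t z"
proof (cases "induced_edges E (Gs t z) = {}")
  case True
  then have "Ez t z = {}" using Ez_ind by blast
  moreover have "\<forall>i \<in> Gs t z. 0 \<le> x i" using Gs_VC VCV x0 by blast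
  ultimately show ?thesis by (auto simp: val_def intro!: sum_nonneg)
next
  case False then show ?thesis using val_ge1 by force
qed

lemma val_nonsingle:
  assumes z: "z \<in> VC" "Gs t z \<noteq> {z}"
  shows "induced_edges E (Gs t z) \<noteq> {}"
proof -
  obtain v where v: "v \<in> Gs t z" "v \<noteq> z" using z Gs_self by blast
  then have "(adj (F t))\<^sup>*\<^sup>* z v" by (simp add: Gs_def)
  then obtain z1 where z1: "adj (F t) z z1" "(adj (F t))\<^sup>*\<^sup>* z1 v"
    using v(2) by (metis converse_rtranclpE)
  have "adj M z z1" using z1(1) adj_mono[OF FM] by blast
  then have e: "{z,z1} \<in> E" "z1 \<in> VC" using MEC ECE adjM_VC by (auto simp: adj_def)
  have "z1 \<in> Gs t z" using z1(1) e(2) by (auto simp: Gs_def)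
  then have "{z,z1} \<in> induced_edges E (Gs t z)"
    using e Gs_self[OF z(1)] by (auto simp: induced_edges_def)
  then show ?thesis by blast
qed

lemma val_single: "Gs t z = {z} \<Longrightarrow> val t z = x z"
proof -
  assume s: "Gs t z = {z}"
  have "Ez t z = {}"
  proof (rule ccontr)
    assume "Ez t z \<noteq> {}"
    then obtain e where e: "e \<in> EC" "e \<subseteq> {z}" using s by (auto simp: Ez_def)
    obtain u v where "u \<noteq> v" "e = {u,v}" using EV ECE e(1) by blast
    then show False using e(2) by auto
  qed
  then show ?thesis using s by (simp add: val_def)
qed

end



lemma two_elems: "finite S \<Longrightarrow> a \<in> S \<Longrightarrow> b \<in> S \<Longrightarrow> a \<noteq> b \<Longrightarrow> card S \<noteq> 1"
proof -
  assume "finite S" "a \<in> S" "b \<in> S" "a \<noteq> b"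
  then have "card {a,b} \<le> card S" by (intro card_mono) auto
  then show ?thesis using \<open>a \<noteq> b\<close> by simp
qed

context fcroot begin

definition Dset where "Dset t = {z \<in> Z t - L. Gs t z = {z} \<and> x z < 1/2}"
definition ch where "ch z = (SOME c. adj M z c \<and> d z < d c)"

lemma deg_ge2:
  assumes "z \<in> VC" "z \<noteq> r" "degree M z \<noteq> 1"
  shows "\<exists>e\<in>M. z \<in> e \<and> e \<noteq> pe z"
proof (rule ccontr)
  assume "\<not> ?thesis"
  then have "{e\<in>M. z \<in> e} = {pe z}" using pe_M[OF assms(1,2)] unfolding pe_def by blast
  then show False using assms(3) by (simp add: degree_def)
qed

lemma child_ex:
  assumes z: "z \<in> VC" "z \<noteq> r" "degree M z \<noteq> 1"
  shows "\<exists>c. adj M z c \<and> d z < d c"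
proof -
  obtain e where e: "e \<in> M" "z \<in> e" "e \<noteq> pe z" using deg_ge2[OF z] by blast
  obtain i j where ij: "i \<noteq> j" "e = {i,j}" using EV MEC ECE e(1) by blast
  obtain c where c: "e = {z,c}" "c \<noteq> z"
  proof (cases "z = i")
    case True then show ?thesis using that[of j] ij by simp
  next
    case False then have "z = j" using ij e(2) by simp
    then show ?thesis using that[of i] ij by (metis insert_commute)
  qed
  have zc: "adj M z c" using e(1) c by (auto simp: adj_def)
  have cp: "c \<noteq> par z" using e(3) c(1) by (auto simp: pe_def)
  have "d c \<noteq> d z" using N1[OF zc] .
  moreover have "\<not> d c < d z"
  proof
    assume "d c < d z"
    then have "c = par z" using par_unique[OF z(1,2) adj_sym[OF zc]] by simp
    then show False using cp by simp
  qed
  ultimately show ?thesis using zc by (intro exI[of _ c]) auto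
qed

lemma ch: "z \<in> VC \<Longrightarrow> z \<noteq> r \<Longrightarrow> degree M z \<noteq> 1 \<Longrightarrow> adj M z (ch z) \<and> d z < d (ch z)"
  unfolding ch_def by (rule someI_ex) (rule child_ex)

lemma Dset_props:
  assumes "z \<in> Dset t"
  shows "z \<in> VC" "z \<noteq> r" "t \<le> w (pe z)" "degree M z \<noteq> 1" "Gs t z = {z}" "x z < 1/2" "z \<notin> L" "z \<in> Z t"
proof -
  show zVC: "z \<in> VC" "Gs t z = {z}" "x z < 1/2" "z \<notin> L" "z \<in> Z t"
    using assms by (auto simp: Dset_def Z_def)
  show zr: "z \<noteq> r" using zVC(3) rx by auto
  show "t \<le> w (pe z)" using zVC(5) zr by (simp add: Z_def)
  show "degree M z \<noteq> 1" using zVC(1,3,4) by (auto simp: L_def)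
qed

lemma ch_props:
  assumes z: "z \<in> Dset t"
  shows "ch z \<in> VC" "ch z \<noteq> r" "par (ch z) = z" "ch z \<in> Z t" "1/2 < x (ch z)"
    "ch z \<notin> L" "ch z \<notin> Dset t" "ch z \<noteq> z" "{z, ch z} \<in> E"
proof -
  note zp = Dset_props[OF z]
  define c where "c = ch z"
  have zc: "adj M z c" "d z < d c" using ch[OF zp(1,2,4)] by (auto simp: c_def)
  show cVC: "ch z \<in> VC" using zc adjM_VC c_def by blast
  show cr: "ch z \<noteq> r" using zc(2) Dr c_def by auto
  show pc: "par (ch z) = z" using par_unique[OF cVC cr] zc c_def by simp
  show cz: "ch z \<noteq> z" using zc(1) c_def by (auto simp: adj_def)
  have heavy: "t \<le> w (pe c)"
  proof (rule ccontr)
    assume "\<not> t \<le> w (pe c)"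
    then have "pe c \<in> F t" using pe_M[OF cVC cr] c_def by (simp add: F_def)
    moreover have "pe c = {c, z}" using pc c_def by (simp add: pe_def)
    ultimately have "{z, c} \<in> F t" by (metis insert_commute)
    then have "adj (F t) z c" using cz c_def by (auto simp: adj_def)
    then have "c \<in> Gs t z" using cVC c_def by (auto simp: Gs_def)
    then show False using zp(5) cz c_def by simp
  qed
  show "ch z \<in> Z t" using cVC heavy c_def by (simp add: Z_def)
  show ezc: "{z, ch z} \<in> E" using zc(1) MEC ECE c_def by (auto simp: adj_def)
  then have "1 \<le> x z + x (ch z)" by (rule pairc)
  then show xc: "1/2 < x (ch z)" using zp(6) by simp
  show "ch z \<notin> L" using xc by (simp add: L_def)
  show "ch z \<notin> Dset t" using xc by (simp add: Dset_def)
qed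

lemma ch_inj: "inj_on ch (Dset t)"
  by (rule inj_onI) (metis ch_props(3))

lemma pair_val:
  assumes z: "z \<in> Dset t"
  shows "1 \<le> val t z + val t (ch z)"
proof -
  note zp = Dset_props[OF z] and cp = ch_props[OF z]
  define c where "c = ch z"
  have vz: "val t z = x z" using val_single zp(5) by simp
  have zn: "z \<notin> Gs t c" using E1[OF zp(8) cp(4)] cp(8) Gs_self[OF zp(1)] c_def by auto
  define S where "S = insert z (Gs t c)"
  have SV: "S \<subseteq> V" using Gs_VC VCV zp(1) by (auto simp: S_def)
  have eS: "{z,c} \<in> induced_edges E S"
    using cp(9) Gs_self[OF cp(1)] c_def by (auto simp: S_def induced_edges_def)
  then have ne: "induced_edges E S \<noteq> {}" by blast
  have 1: "1 \<le> (\<Sum>i\<in>S. x i) - (\<Sum>e\<in>induced_edges E S. y e)" using setc[OF SV ne] .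
  have 2: "(\<Sum>i\<in>S. x i) = x z + (\<Sum>i\<in>Gs t c. x i)" using zn finGs by (simp add: S_def)
  have sub: "Ez t c \<subseteq> induced_edges E S" using Ez_ind by (auto simp: S_def induced_edges_def)
  have 3: "(\<Sum>e\<in>Ez t c. y e) \<le> (\<Sum>e\<in>induced_edges E S. y e)"
    using sub finE y0 by (intro sum_mono2) (auto simp: induced_edges_def)
  show ?thesis using 1 2 3 vz by (simp add: val_def c_def)
qed

lemma half_val:
  assumes z: "z \<in> Z t - L - Dset t"
  shows "1/2 \<le> val t z"
proof (cases "Gs t z = {z}")
  case True
  then have "\<not> x z < 1/2" using z by (auto simp: Dset_def)
  then show ?thesis using val_single[OF True] by simp
next
  case False
  have "z \<in> VC" using z by (simp add: Z_def)
  then show ?thesis using val_ge1[OF val_nonsingle[OF _ False]] by simp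
qed

lemma sum_val: "real (card (Z t - L)) / 2 \<le> (\<Sum>z\<in>Z t. val t z)"
proof (rule pair_sum[OF finZ, where P="Z t - L" and D="Dset t" and c=ch])
  show "Z t - L \<subseteq> Z t" by auto
  show "Dset t \<subseteq> Z t - L" by (auto simp: Dset_def)
  show "inj_on ch (Dset t)" by (rule ch_inj)
  show "ch ` Dset t \<subseteq> Z t - L - Dset t" using ch_props by blast
  show "\<forall>z\<in>Dset t. 1 \<le> val t z + val t (ch z)" using pair_val by blast
  show "\<forall>z\<in>Z t - L - Dset t. 1 / 2 \<le> val t z" using half_val by blast
  show "\<forall>z\<in>Z t - (Z t - L). 0 \<le> val t z" using val_ge0 by blast
qed

lemma rL: "r \<notin> L" using rx by (simp add: L_def)

lemma pe_ET:
  assumes z: "z \<in> VC" "z \<noteq> r" "z \<notin> L"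
  shows "pe z \<in> ET"
proof -
  have p: "adj M (par z) z" "d (par z) < d z" using par z by auto
  define p where "p = par z"
  have pVC: "p \<in> VC" using p adjM_VC p_def by blast
  have pL: "p \<notin> L"
  proof (cases "p = r")
    case True then show ?thesis using rL by simp
  next
    case False
    have pp: "adj M (par p) p" "d (par p) < d p" using par pVC False by auto
    have e1: "pe p \<in> M" using pe_M[OF pVC False] .
    have e2: "pe z \<in> M" using pe_M[OF z(1,2)] .
    have ne: "pe p \<noteq> pe z"
    proof
      assume "pe p = pe z"
      then have "z \<in> {p, par p}" by (auto simp: pe_def p_def)
      moreover have "z \<noteq> p" using p(1) p_def by (auto simp: adj_def)
      moreover have "z \<noteq> par p" using pp(2) p(2) p_def by auto
      ultimately show False by simp
    qed
    have "card {e\<in>M. p \<in> e} \<noteq> 1"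
      using two_elems[of "{e\<in>M. p \<in> e}" "pe p" "pe z"] finM e1 e2 ne
      by (auto simp: pe_def p_def)
    then show ?thesis by (simp add: L_def degree_def)
  qed
  show ?thesis using pe_M[OF z(1,2)] z(3) pL by (auto simp: ET_def pe_def p_def)
qed

lemma pe_inj: "inj_on pe (VC - {r})"
proof (rule inj_onI)
  fix z1 z2 assume z: "z1 \<in> VC - {r}" "z2 \<in> VC - {r}" "pe z1 = pe z2"
  have p1: "d (par z1) < d z1" and p2: "d (par z2) < d z2" using par z by auto
  show "z1 = z2"
  proof (rule ccontr)
    assume "z1 \<noteq> z2"
    then have "z1 = par z2 \<and> par z1 = z2" using z(3) by (auto simp: pe_def doubleton_eq_iff)
    then show False using p1 p2 by auto
  qed
qed

lemma count: "real (card VT) - real (card {e\<in>ET. w e < t}) \<le> real (card (Z t - L))"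
proof -
  have rVT: "r \<in> VT" using rVC rL by (simp add: VT_def)
  define A where "A = VT - {r}"
  have finVT: "finite VT" using finVC by (simp add: VT_def)
  have finA: "finite A" using finVT by (simp add: A_def)
  have c1: "card VT = Suc (card A)" unfolding A_def by (rule card.remove[OF finVT rVT])
  define Ah where "Ah = {z\<in>A. t \<le> w (pe z)}"
  define Al where "Al = {z\<in>A. w (pe z) < t}"
  have c2: "card A = card Ah + card Al"
  proof -
    have "A = Ah \<union> Al" "Ah \<inter> Al = {}" by (auto simp: Ah_def Al_def)
    moreover have "finite Ah" "finite Al" using finA by (auto simp: Ah_def Al_def)
    ultimately show ?thesis by (simp add: card_Un_disjoint)
  qed
  have sub: "insert r Ah \<subseteq> Z t - L" using rVC rL by (auto simp: Ah_def A_def VT_def Z_def)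
  have rAh: "r \<notin> Ah" by (simp add: Ah_def A_def)
  have finZL: "finite (Z t - L)" using finZ by simp
  have c3: "Suc (card Ah) \<le> card (Z t - L)"
  proof -
    have "finite Ah" using finA by (simp add: Ah_def)
    then show ?thesis using card_mono[OF finZL sub] rAh by simp
  qed
  have finET: "finite {e\<in>ET. w e < t}" using finM by (simp add: ET_def)
  have img: "pe ` Al \<subseteq> {e\<in>ET. w e < t}" using pe_ET by (auto simp: Al_def A_def VT_def)
  have injAl: "inj_on pe Al" using pe_inj by (rule inj_on_subset) (auto simp: Al_def A_def VT_def)
  have c4: "card Al \<le> card {e\<in>ET. w e < t}" using card_inj_on_le[OF injAl img finET] .
  show ?thesis using c1 c2 c3 c4 by simp
qed

lemma per_t: "real (card VT) - real (card {e\<in>ET. w e < t})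
   \<le> 2 * ((\<Sum>i\<in>VC. x i) - (\<Sum>e\<in>{e\<in>EC. w e < t}. y e))"
  using count[of t] sum_val[of t] E4[of t] by simp

end



lemma ind_int:
  fixes a :: real
  assumes "0 \<le> a" "a \<le> 1"
  shows "((\<lambda>t. if a < t then 1::real else 0) has_integral (1 - a)) {0..1}"
proof -
  have i1: "((\<lambda>t::real. if a < t then 1::real else 0) has_integral 0) {0..a}"
  proof -
    have "((\<lambda>t::real. 0::real) has_integral 0) {0..a}" by (rule has_integral_0)
    moreover have "((\<lambda>t::real. if a < t then 1::real else 0) has_integral 0) {0..a} = ((\<lambda>t. 0::real) has_integral 0) {0..a}"
      by (rule has_integral_cong) auto
    ultimately show ?thesis by simp
  qed
  have i2: "((\<lambda>t::real. if a < t then 1::real else 0) has_integral (1 - a)) {a..1}"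
  proof -
    have "((\<lambda>t::real. 1::real) has_integral (1 * (1 - a))) {a..1}"
      using has_integral_const_real[of "1::real" a 1] assms by simp
    then have h1: "((\<lambda>t::real. 1::real) has_integral (1 - a)) {a..1}" by simp
    show ?thesis by (rule has_integral_spike_finite[where S="{a}", OF _ _ h1]) auto
  qed
  show ?thesis using has_integral_combine[OF assms i1 i2] by simp
qed

lemma integrate_ineq:
  fixes A :: real and c :: "'e \<Rightarrow> real" and wa wb :: "'e \<Rightarrow> real" and B :: real
  assumes finA: "finite SA" and finB: "finite SB"
    and wa: "\<forall>e\<in>SA. 0 \<le> wa e \<and> wa e \<le> 1" and wb: "\<forall>e\<in>SB. 0 \<le> wb e \<and> wb e \<le> 1"
    and pt: "\<And>t. B - (\<Sum>e\<in>SB. if wb e < t then 1 else 0) \<le> 2 * (A - (\<Sum>e\<in>SA. c e * (if wa e < t then 1 else 0)))"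
  shows "B - (\<Sum>e\<in>SB. 1 - wb e) \<le> 2 * (A - (\<Sum>e\<in>SA. c e * (1 - wa e)))"
proof -
  have iA: "((\<lambda>t. \<Sum>e\<in>SA. c e * (if wa e < t then 1 else 0)) has_integral (\<Sum>e\<in>SA. c e * (1 - wa e))) {0..1::real}"
    using wa by (intro has_integral_sum[OF finA] has_integral_mult_right ind_int) auto
  have iB: "((\<lambda>t. \<Sum>e\<in>SB. if wb e < t then 1 else 0) has_integral (\<Sum>e\<in>SB. 1 - wb e)) {0..1::real}"
    using wb by (intro has_integral_sum[OF finB] ind_int) auto
  have cA: "((\<lambda>t::real. A) has_integral A) {0..1}" using has_integral_const_real[of A 0 1] by simp
  have cB: "((\<lambda>t::real. B) has_integral B) {0..1}" using has_integral_const_real[of B 0 1] by simp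
  have g1: "((\<lambda>t. 2 * (A - (\<Sum>e\<in>SA. c e * (if wa e < t then 1 else 0)))) has_integral
      (2 * (A - (\<Sum>e\<in>SA. c e * (1 - wa e))))) {0..1::real}"
    by (intro has_integral_mult_right has_integral_diff cA iA)
  have g2: "((\<lambda>t. B - (\<Sum>e\<in>SB. if wb e < t then 1 else 0)) has_integral
      (B - (\<Sum>e\<in>SB. 1 - wb e))) {0..1::real}"
    by (intro has_integral_diff cB iB)
  show ?thesis using has_integral_le[OF g2 g1] pt by blast
qed


context fcroot begin

lemma main_ineq:
  "(1/2) * (real (card VT) - (\<Sum>e\<in>ET. 1 - w e)) \<le> (\<Sum>i\<in>VC. x i) - (\<Sum>e\<in>EC. y e * (1 - w e))"
proof -
  have finET: "finite ET" using finM by (simp add: ET_def)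
  have ETEC: "ET \<subseteq> EC" using MEC by (auto simp: ET_def)
  have wEC: "\<forall>e\<in>EC. 0 \<le> w e \<and> w e \<le> 1" using ECE w01 by blast
  have wET: "\<forall>e\<in>ET. 0 \<le> w e \<and> w e \<le> 1" using wEC ETEC by blast
  have e1: "(\<Sum>e\<in>{e\<in>EC. w e < t}. y e) = (\<Sum>e\<in>EC. y e * (if w e < t then 1 else 0))" for t
  proof -
    have "(\<Sum>e\<in>{e\<in>EC. w e < t}. y e) = (\<Sum>e\<in>EC. if w e < t then y e else 0)"
      by (rule sum.inter_filter[OF finEC])
    also have "\<dots> = (\<Sum>e\<in>EC. y e * (if w e < t then 1 else 0))" by (intro sum.cong) auto
    finally show ?thesis .
  qed
  have e2: "real (card {e\<in>ET. w e < t}) = (\<Sum>e\<in>ET. if w e < t then 1 else 0)" for t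
  proof -
    have "(\<Sum>e\<in>{e\<in>ET. w e < t}. (1::real)) = (\<Sum>e\<in>ET. if w e < t then 1 else 0)"
      by (rule sum.inter_filter[OF finET])
    then show ?thesis by simp
  qed
  have pt: "real (card VT) - (\<Sum>e\<in>ET. if w e < t then 1 else 0)
      \<le> 2 * ((\<Sum>i\<in>VC. x i) - (\<Sum>e\<in>EC. y e * (if w e < t then 1 else 0)))" for t
    using per_t[of t] e1[of t] e2[of t] by simp
  have "real (card VT) - (\<Sum>e\<in>ET. 1 - w e) \<le> 2 * ((\<Sum>i\<in>VC. x i) - (\<Sum>e\<in>EC. y e * (1 - w e)))"
    by (rule integrate_ineq[OF finEC finET wEC wET pt])
  then show ?thesis by simp
qed

end

theorem mainTheorem8:
  fixes V :: "'a set" and E :: "'a set set" and w :: "'a set \<Rightarrow> real"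
    and x :: "'a \<Rightarrow> real" and y :: "'a set \<Rightarrow> real"
    and VC :: "'a set" and M :: "'a set set"
  assumes G: "graph V E"
    and w01: "\<forall>e\<in>E. 0 \<le> w e \<and> w e \<le> 1"
    and opt: "fc_optimal V E w x y"
    and comp: "connected_comp {i \<in> V. x i > 0} {e \<in> E. y e > 0} VC"
    and hasedge: "induced_edges {e \<in> E. y e > 0} VC \<noteq> {}"
    and mst: "min_spanning_tree VC (induced_edges {e \<in> E. y e > 0} VC) w M"
  shows "(let EC = induced_edges {e \<in> E. y e > 0} VC;
              L = {i \<in> VC. degree M i = 1 \<and> x i < 1/2};
              VT = VC - L;
              ET = {e \<in> M. e \<inter> L = {}}
          in (\<Sum>i\<in>VC. x i) - (\<Sum>e\<in>EC. y e * (1 - w e))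
             \<ge> (1/2) * (real (card VT) - (\<Sum>e\<in>ET. 1 - w e)))"
  proof -
  interpret S: fcset V E w x y VC M
    using G w01 opt comp hasedge mst by unfold_locales (auto simp: fc_optimal_def)
  obtain e where e: "e \<in> induced_edges {e \<in> E. y e > 0} VC" using hasedge by blast
  then have eE: "e \<in> E" and eVC: "e \<subseteq> VC" by (auto simp: induced_edges_def)
  obtain i j where ij: "i \<noteq> j" "e = {i,j}" using S.EV[OF eE] by blast
  have "1 \<le> x i + x j" using S.pairc eE ij by simp
  then obtain r where r: "r \<in> VC" "1/2 \<le> x r"
    using eVC ij by (cases "1/2 \<le> x i") auto
  interpret R: fcroot V E w x y VC M r
    using r by unfold_locales auto
  show ?thesis using R.main_ineq
    unfolding Let_def R.L_def R.VT_def R.ET_def S.EC_def by simp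
qed

end
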